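(* For every object $V$ of $\mathcal{E}_q^{deg}$, the isotropic functor $iso_V$ is self-dual in $\mathcal{F}_{iso}$: there exists an isomorphism $\gamma:iso_V\xrightarrow{\simeq}D(iso_V)$ which is self-adjoint, i.e. $\gamma=D\gamma\circ\eta_{iso_V}$, where $\eta_F:F\to D^2F$ is the unit of the adjunction between $D$ and $D^{op}$.
   Context: $\mathcal{E}$: all $\mathbb{F}_2$-vector spaces; $(-)^*$ linear duality. $\mathcal{E}_q^{deg}$: objects finite-dimensional quadratic spaces over $\mathbb{F}_2$ (possibly degenerate), morphisms injective linear maps preserving quadratic forms. $\mathrm{Sp}(\mathcal{E}_q^{deg})$: same objects, morphisms spans $[V\leftarrow D\rightarrow W]$ up to iso of $D$, composed by pullback (intersection of images). $\mathcal{F}_{iso}=\mathrm{Func}(\mathrm{Sp}(\mathcal{E}_q^{deg}),\mathcal{E})$. Transposition $tr:\mathrm{Sp}(\mathcal{E}_q^{deg})^{op}\to\mathrm{Sp}(\mathcal{E}_q^{deg})$ sends $[V\leftarrow X\rightarrow W]$ to $[W\leftarrow X\rightarrow V]$; the duality $D:\mathcal{F}_{iso}^{op}\to\mathcal{F}_{iso}$ is $DF=(-)^*\circ F\circ tr^{op}$; $D$ is right adjoint to $D^{op}$ with unit $\eta_F:F\to D^2F$ (the canonical map to the double dual). $Q_V=\mathbb{F}_2[\mathrm{Hom}_{\mathrm{Sp}(\mathcal{E}_q^{deg})}(V,-)]$. Let $(\mathrm{Id}_V)^*\in DQ_V(V)=\mathbb{F}_2[\mathrm{End}(V)]^*$ be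 the linear form with value $1$ on $\mathrm{Id}_V$ and $0$ on every other basis element, and $a_V:Q_V\to DQ_V$ the morphism corresponding to it by the Yoneda lemma. The isotropic functor $iso_V$ is the image of $a_V$. *)

theory Defs
  imports Main "HOL-Library.Z2" "HOL-Library.Function_Algebras"
begin

text \<open>Every finite-dimensional F_2-vector space is
  isomorphic to some F_2^n, which we realise as the functions nat => bit vanishing
  from index n on.  An object of E_q^deg is a pair (n, q) with q a (possibly
  degenerate) quadratic form on F_2^n; this is an equivalent full subcategory.\<close>

type_synonym vec = "nat \<Rightarrow> bit"
type_synonym qspace = "nat \<times> (vec \<Rightarrow> bit)"

definition vecs :: "nat \<Rightarrow> vec set" where
  "vecs n = {x. \<forall>i\<ge>n. x i = 0}"

definition qdim :: "qspace \<Rightarrow> nat" where "qdim V = fst V"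
definition qform :: "qspace \<Rightarrow> vec \<Rightarrow> bit" where "qform V = snd V"
definition carrier_q :: "qspace \<Rightarrow> vec set" where "carrier_q V = vecs (qdim V)"

text \<open>Quadratic form over F_2: q(0) = 0 (i.e. q(a x) = a^2 q(x)) and the polar form
  B(x,y) = q(x+y) + q(x) + q(y) is bilinear (over F_2 additivity in each variable is
  linearity; B is symmetric).  q is taken to vanish off the carrier (normalisation).\<close>
definition is_qspace :: "qspace \<Rightarrow> bool" where
  "is_qspace V \<longleftrightarrow>
     qform V 0 = 0 \<and>
     (\<forall>x y z. x \<in> carrier_q V \<longrightarrow> y \<in> carrier_q V \<longrightarrow> z \<in> carrier_q V \<longrightarrow>
        qform V (x + y + z) + qform V (x + y) + qform V z
        = (qform V (x + z) + qform V x + qform V z) + (qform V (y + z) + qform V y + qform V z)) \<and>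
     (\<forall>x. x \<notin> carrier_q V \<longrightarrow> qform V x = 0)"

definition qobj :: "qspace set" where "qobj = {V. is_qspace V}"

text \<open>A span [V <- D -> W] of injective isometries, up to isomorphism of D, is
  determined by the image of D in V x W, i.e. by its graph R = {(f d, g d)}: a linear
  subspace of V x W on which both projections are injective and q_V(x) = q_W(y).
  Conversely each such R, with the restricted form, is such a span.  Composition by
  pullback is relational composition of graphs, and transposition is converse.\<close>

type_synonym rel = "(vec \<times> vec) set"

definition span_hom :: "qspace \<Rightarrow> qspace \<Rightarrow> rel set" where
  "span_hom V W = {R. R \<subseteq> carrier_q V \<times> carrier_q W \<and> (0, 0) \<in> R \<and>
      (\<forall>a b c d. (a, b) \<in> R \<longrightarrow> (c, d) \<in> R \<longrightarrow> (a + c, b + d) \<in> R) \<and>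
      (\<forall>a b c. (a, b) \<in> R \<longrightarrow> (a, c) \<in> R \<longrightarrow> b = c) \<and>
      (\<forall>a b c. (a, c) \<in> R \<longrightarrow> (b, c) \<in> R \<longrightarrow> a = b) \<and>
      (\<forall>a b. (a, b) \<in> R \<longrightarrow> qform V a = qform W b)}"

definition span_id :: "qspace \<Rightarrow> rel" where
  "span_id V = {(x, x) | x. x \<in> carrier_q V}"

text \<open>Composite of R : V -> W followed by S : W -> X is  R O S : V -> X.
  Transposition of R : V -> W is  converse R : W -> V.\<close>

text \<open>An F_2-vector space is represented by a carrier set inside a type of class
  ab_group_add, closed under addition, containing 0, with x + x = 0 (the scalar
  action of F_2 is then determined).  Linear maps are additive maps between carriers;
  they are compared on carriers only.\<close>

definition f2space :: "'v::ab_group_add set \<Rightarrow> bool" where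
  "f2space S \<longleftrightarrow> 0 \<in> S \<and> (\<forall>x\<in>S. \<forall>y\<in>S. x + y \<in> S) \<and> (\<forall>x\<in>S. x + x = 0)"

definition f2linear :: "'v::ab_group_add set \<Rightarrow> 'w::ab_group_add set \<Rightarrow> ('v \<Rightarrow> 'w) \<Rightarrow> bool" where
  "f2linear S T f \<longleftrightarrow> (\<forall>x\<in>S. f x \<in> T) \<and> (\<forall>x\<in>S. \<forall>y\<in>S. f (x + y) = f x + f y)"

definition is_functor ::
  "(qspace \<Rightarrow> 'v::ab_group_add set) \<Rightarrow> (qspace \<Rightarrow> qspace \<Rightarrow> rel \<Rightarrow> 'v \<Rightarrow> 'v) \<Rightarrow> bool" where
  "is_functor Fo Fm \<longleftrightarrow>
     (\<forall>V\<in>qobj. f2space (Fo V)) \<and>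
     (\<forall>V\<in>qobj. \<forall>W\<in>qobj. \<forall>R\<in>span_hom V W. f2linear (Fo V) (Fo W) (Fm V W R)) \<and>
     (\<forall>V\<in>qobj. \<forall>x\<in>Fo V. Fm V V (span_id V) x = x) \<and>
     (\<forall>V\<in>qobj. \<forall>W\<in>qobj. \<forall>X\<in>qobj. \<forall>R\<in>span_hom V W. \<forall>S\<in>span_hom W X. \<forall>x\<in>Fo V.
        Fm V X (R O S) x = Fm W X S (Fm V W R x))"

text \<open>Natural isomorphisms F => G in F_iso (componentwise linear bijections; their
  inverses are then automatically linear and natural).\<close>
definition is_nat_iso ::
  "(qspace \<Rightarrow> 'v::ab_group_add set) \<Rightarrow> (qspace \<Rightarrow> qspace \<Rightarrow> rel \<Rightarrow> 'v \<Rightarrow> 'v) \<Rightarrow>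
   (qspace \<Rightarrow> 'w::ab_group_add set) \<Rightarrow> (qspace \<Rightarrow> qspace \<Rightarrow> rel \<Rightarrow> 'w \<Rightarrow> 'w) \<Rightarrow>
   (qspace \<Rightarrow> 'v \<Rightarrow> 'w) \<Rightarrow> bool" where
  "is_nat_iso Fo Fm Go Gm \<gamma> \<longleftrightarrow>
     (\<forall>V\<in>qobj. f2linear (Fo V) (Go V) (\<gamma> V) \<and> bij_betw (\<gamma> V) (Fo V) (Go V)) \<and>
     (\<forall>V\<in>qobj. \<forall>W\<in>qobj. \<forall>R\<in>span_hom V W. \<forall>x\<in>Fo V.
        \<gamma> W (Fm V W R x) = Gm V W R (\<gamma> V x))"

definition dual :: "'v::ab_group_add set \<Rightarrow> ('v \<Rightarrow> bit) set" where
  "dual S = {\<phi>. (\<forall>x\<in>S. \<forall>y\<in>S. \<phi> (x + y) = \<phi> x + \<phi> y) \<and> (\<forall>x. x \<notin> S \<longrightarrow> \<phi> x = 0)}"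

definition dualmap :: "'v set \<Rightarrow> ('v \<Rightarrow> 'w) \<Rightarrow> ('w \<Rightarrow> bit) \<Rightarrow> ('v \<Rightarrow> bit)" where
  "dualmap S f \<phi> = (\<lambda>x. if x \<in> S then \<phi> (f x) else 0)"

definition Dobj :: "(qspace \<Rightarrow> 'v::ab_group_add set) \<Rightarrow> qspace \<Rightarrow> ('v \<Rightarrow> bit) set" where
  "Dobj Fo V = dual (Fo V)"

definition Dmor :: "(qspace \<Rightarrow> 'v set) \<Rightarrow> (qspace \<Rightarrow> qspace \<Rightarrow> rel \<Rightarrow> 'v \<Rightarrow> 'v) \<Rightarrow>
    qspace \<Rightarrow> qspace \<Rightarrow> rel \<Rightarrow> ('v \<Rightarrow> bit) \<Rightarrow> ('v \<Rightarrow> bit)" where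
  "Dmor Fo Fm V W R = dualmap (Fo W) (Fm W V (converse R))"

definition Dnat :: "(qspace \<Rightarrow> 'v set) \<Rightarrow> (qspace \<Rightarrow> 'v \<Rightarrow> 'w) \<Rightarrow> qspace \<Rightarrow> ('w \<Rightarrow> bit) \<Rightarrow> ('v \<Rightarrow> bit)" where
  "Dnat Fo \<gamma> V = dualmap (Fo V) (\<gamma> V)"

definition eta :: "(qspace \<Rightarrow> 'v::ab_group_add set) \<Rightarrow> qspace \<Rightarrow> 'v \<Rightarrow> (('v \<Rightarrow> bit) \<Rightarrow> bit)" where
  "eta Fo V x = (\<lambda>\<phi>. if \<phi> \<in> dual (Fo V) then \<phi> x else 0)"

text \<open>Q_V(W) = F_2[Hom(V,W)], as finitely supported functions Hom(V,W) -> F_2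
  (Hom(V,W) is finite); Q_V(R) is the linear extension of f |-> R o f.\<close>
definition Qobj :: "qspace \<Rightarrow> qspace \<Rightarrow> (rel \<Rightarrow> bit) set" where
  "Qobj V W = {c. \<forall>f. f \<notin> span_hom V W \<longrightarrow> c f = 0}"

definition Qmor :: "qspace \<Rightarrow> qspace \<Rightarrow> qspace \<Rightarrow> rel \<Rightarrow> (rel \<Rightarrow> bit) \<Rightarrow> (rel \<Rightarrow> bit)" where
  "Qmor V W X R c = (\<lambda>g. \<Sum>f\<in>{f \<in> span_hom V W. f O R = g}. c f)"

definition DQobj :: "qspace \<Rightarrow> qspace \<Rightarrow> ((rel \<Rightarrow> bit) \<Rightarrow> bit) set" where
  "DQobj V = Dobj (Qobj V)"

definition DQmor :: "qspace \<Rightarrow> qspace \<Rightarrow> qspace \<Rightarrow> rel \<Rightarrow> ((rel \<Rightarrow> bit) \<Rightarrow> bit) \<Rightarrow> ((rel \<Rightarrow> bit) \<Rightarrow> bit)" where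
  "DQmor V = Dmor (Qobj V) (Qmor V)"

definition id_star :: "qspace \<Rightarrow> (rel \<Rightarrow> bit) \<Rightarrow> bit" where
  "id_star V = (\<lambda>c. if c \<in> Qobj V V then c (span_id V) else 0)"

text \<open>a_V : Q_V -> DQ_V, the morphism corresponding to (Id_V)^* by Yoneda:
  on the basis element f in Hom(V,W) it is DQ_V(f)((Id_V)^*), extended linearly.\<close>
definition a_map :: "qspace \<Rightarrow> qspace \<Rightarrow> (rel \<Rightarrow> bit) \<Rightarrow> ((rel \<Rightarrow> bit) \<Rightarrow> bit)" where
  "a_map V W c = (\<Sum>f\<in>span_hom V W. (\<lambda>x. c f * DQmor V V W f (id_star V) x))"

text \<open>iso_V = image of a_V, a subfunctor of DQ_V.\<close>
definition iso_obj :: "qspace \<Rightarrow> qspace \<Rightarrow> ((rel \<Rightarrow> bit) \<Rightarrow> bit) set" where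
  "iso_obj V W = a_map V W ` Qobj V W"

definition iso_mor :: "qspace \<Rightarrow> qspace \<Rightarrow> qspace \<Rightarrow> rel \<Rightarrow> ((rel \<Rightarrow> bit) \<Rightarrow> bit) \<Rightarrow> ((rel \<Rightarrow> bit) \<Rightarrow> bit)" where
  "iso_mor V = DQmor V"

end

theory Submission
  imports Defs
begin
declare mult_bit_eq_and[simp del] add_bit_eq_xor[simp del]

lemma sum_fun_apply: "(\<Sum>f\<in>A. g f) x = (\<Sum>f\<in>A. g f x)"
proof (cases "finite A")
  case True then show ?thesis by (induction A rule: finite_induct) (auto simp: plus_fun_def)
qed (simp)

lemma finite_vecs: "finite (vecs n)"
proof -
  have "vecs n = {f. \<forall>x. (x \<in> {..<n} \<longrightarrow> f x \<in> (UNIV::bit set)) \<and> (x \<notin> {..<n} \<longrightarrow> f x = 0)}"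
    by (auto simp: vecs_def)
  moreover have "(UNIV::bit set) = {0,1}" by (auto intro: bit.exhaust)
  then have "finite (UNIV::bit set)" by (metis finite.emptyI finite_insert)
  ultimately show ?thesis using finite_set_of_finite_funs[of "{..<n}" "UNIV::bit set" 0] by simp
qed

lemma finite_hom: "finite (span_hom V W)"
proof -
  have "span_hom V W \<subseteq> Pow (carrier_q V \<times> carrier_q W)" by (auto simp: span_hom_def)
  moreover have "finite (Pow (carrier_q V \<times> carrier_q W))" by (simp add: carrier_q_def finite_vecs)
  ultimately show ?thesis by (rule finite_subset)
qed

lemma comp_hom: "R \<in> span_hom V W \<Longrightarrow> S \<in> span_hom W X \<Longrightarrow> R O S \<in> span_hom V X"
  unfolding span_hom_def
  apply (clarsimp simp: relcomp_unfold)
  apply (intro conjI)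
       apply blast
      apply blast
     apply (metis)
    apply metis
   apply metis
  apply metis
  done

lemma conv_hom: "R \<in> span_hom V W \<Longrightarrow> converse R \<in> span_hom W V"
  unfolding span_hom_def mem_Collect_eq
  apply (elim conjE, intro conjI)
  apply auto
  done

lemma bit_self: "(x::bit) + x = 0" by (cases x) auto

lemma homD:
  assumes "R \<in> span_hom V W"
  shows "R \<subseteq> carrier_q V \<times> carrier_q W"
    "\<And>a b c. (a, b) \<in> R \<Longrightarrow> (a, c) \<in> R \<Longrightarrow> b = c"
    "\<And>a b c. (a, c) \<in> R \<Longrightarrow> (b, c) \<in> R \<Longrightarrow> a = b"
  using assms unfolding span_hom_def mem_Collect_eq by metis+

lemma fiber_sum:
  fixes G :: "'b \<Rightarrow> 'c::comm_semiring_1"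
  assumes "finite S" "finite T" "k ` S \<subseteq> T"
  shows "(\<Sum>g\<in>T. G g * (\<Sum>h\<in>{h \<in> S. k h = g}. y h)) = (\<Sum>h\<in>S. G (k h) * y h)"
proof -
  have "(\<Sum>g\<in>T. G g * (\<Sum>h\<in>{h \<in> S. k h = g}. y h)) = (\<Sum>g\<in>T. (\<Sum>h\<in>{h \<in> S. k h = g}. G (k h) * y h))"
    by (intro sum.cong refl) (auto simp: sum_distrib_left)
  also have "\<dots> = (\<Sum>h\<in>S. G (k h) * y h)"
    using sum.group[OF assms, of "\<lambda>h. G (k h) * y h"] by simp
  finally show ?thesis .
qed

definition Pb :: "qspace \<Rightarrow> rel \<Rightarrow> rel \<Rightarrow> bit" where
  "Pb V f h = (if h O converse f = span_id V then 1 else 0)"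

definition pair :: "qspace \<Rightarrow> qspace \<Rightarrow> (rel \<Rightarrow> bit) \<Rightarrow> (rel \<Rightarrow> bit) \<Rightarrow> bit" where
  "pair V W c y = (\<Sum>f\<in>span_hom V W. \<Sum>h\<in>span_hom V W. c f * y h * Pb V f h)"

lemma conv_span_id: "converse (span_id V) = span_id V"
  by (auto simp: span_id_def)

lemma Pb_sym: "Pb V f h = Pb V h f"
proof -
  have "(h O converse f = span_id V) = (f O converse h = span_id V)"
    by (metis conv_span_id converse_converse converse_relcomp)
  then show ?thesis by (simp add: Pb_def)
qed

lemma pair_sym: "pair V W c y = pair V W y c"
  unfolding pair_def
  by (subst sum.swap) (simp add: Pb_sym mult.commute mult.left_commute)

lemma pair_add1: "pair V W (c + c') y = pair V W c y + pair V W c' y"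
  by (simp add: pair_def plus_fun_def distrib_right sum.distrib)

lemma pair_add2: "pair V W y (c + c') = pair V W y c + pair V W y c'"
  by (metis pair_sym pair_add1)

lemma Qmor_in: "R \<in> span_hom W X \<Longrightarrow> Qmor V W X R y \<in> Qobj V X"
proof -
  assume R: "R \<in> span_hom W X"
  have "sum y {f \<in> span_hom V W. f O R = g} = 0" if "g \<notin> span_hom V X" for g
  proof -
    have "{f \<in> span_hom V W. f O R = g} = {}"
      using that comp_hom[OF _ R] by blast
    then show ?thesis by (simp only: sum.empty)
  qed
  then show ?thesis unfolding Qobj_def Qmor_def mem_Collect_eq by blast
qed

lemma Pb_comp: "Pb V f (h O R) = Pb V (f O converse R) h"
  by (simp add: Pb_def converse_relcomp O_assoc)

lemma adjoint:
  assumes R: "R \<in> span_hom W X"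
  shows "pair V X x (Qmor V W X R y) = pair V W (Qmor V X W (converse R) x) y"
proof -
  have R': "converse R \<in> span_hom X W" using R by (rule conv_hom)
  have fin: "finite (span_hom V W)" "finite (span_hom V X)" by (rule finite_hom)+
  have im1: "(\<lambda>h. h O R) ` span_hom V W \<subseteq> span_hom V X" using R comp_hom by blast
  have im2: "(\<lambda>f. f O converse R) ` span_hom V X \<subseteq> span_hom V W" using R' comp_hom by blast
  have "pair V X x (Qmor V W X R y)
     = (\<Sum>f\<in>span_hom V X. \<Sum>g\<in>span_hom V X. (x f * Pb V f g) * (\<Sum>h\<in>{h \<in> span_hom V W. h O R = g}. y h))"
    unfolding pair_def Qmor_def by (simp add: ac_simps)
  also have "\<dots> = (\<Sum>f\<in>span_hom V X. \<Sum>h\<in>span_hom V W. (x f * Pb V f (h O R)) * y h)"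
    by (intro sum.cong refl fiber_sum[OF fin(1) fin(2) im1])
  also have "\<dots> = (\<Sum>h\<in>span_hom V W. \<Sum>f\<in>span_hom V X. (y h * Pb V (f O converse R) h) * x f)"
    by (subst sum.swap) (simp add: Pb_comp ac_simps)
  also have "\<dots> = (\<Sum>h\<in>span_hom V W. \<Sum>f'\<in>span_hom V W. (y h * Pb V f' h) * (\<Sum>f\<in>{f \<in> span_hom V X. f O converse R = f'}. x f))"
    by (intro sum.cong refl fiber_sum[OF fin(2) fin(1) im2, symmetric])
  also have "\<dots> = pair V W (Qmor V X W (converse R) x) y"
    unfolding pair_def Qmor_def by (subst sum.swap) (simp add: ac_simps)
  finally show ?thesis .
qed

lemma DQ_id:
  assumes f: "f \<in> span_hom V W"
  shows "DQmor V V W f (id_star V) y = (if y \<in> Qobj V W then (\<Sum>h\<in>span_hom V W. y h * Pb V f h) else 0)"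
proof -
  have inq: "Qmor V W V (converse f) y \<in> Qobj V V" using conv_hom[OF f] by (rule Qmor_in)
  have "Qmor V W V (converse f) y (span_id V) = (\<Sum>h\<in>span_hom V W. y h * Pb V f h)"
    unfolding Qmor_def Pb_def by (auto simp: sum.inter_filter[OF finite_hom] intro!: sum.cong)
  then show ?thesis using inq
    by (simp add: DQmor_def Dmor_def dualmap_def id_star_def)
qed

lemma a_formula: "a_map V W c = (\<lambda>y. if y \<in> Qobj V W then pair V W c y else 0)"
proof
  fix y
  have "a_map V W c y = (\<Sum>f\<in>span_hom V W. c f * DQmor V V W f (id_star V) y)"
    unfolding a_map_def by (simp add: sum_fun_apply)
  also have "\<dots> = (\<Sum>f\<in>span_hom V W. c f * (if y \<in> Qobj V W then (\<Sum>h\<in>span_hom V W. y h * Pb V f h) else 0))"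
    by (intro sum.cong refl) (simp add: DQ_id)
  also have "\<dots> = (if y \<in> Qobj V W then pair V W c y else 0)"
    by (simp add: pair_def sum_distrib_left ac_simps)
  finally show "a_map V W c y = (if y \<in> Qobj V W then pair V W c y else 0)" .
qed

lemma a_app: "x \<in> Qobj V W \<Longrightarrow> a_map V W c x = pair V W c x"
  by (simp add: a_formula)

lemma a_add: "a_map V W (x + x') = a_map V W x + a_map V W x'"
  by (rule ext) (simp add: a_formula pair_add1)

lemma Qobj_add: "x \<in> Qobj V W \<Longrightarrow> x' \<in> Qobj V W \<Longrightarrow> x + x' \<in> Qobj V W"
  by (simp add: Qobj_def)

lemma Qobj_zero: "0 \<in> Qobj V W"
  by (simp add: Qobj_def)

lemma a_nat:
  assumes R: "R \<in> span_hom W X"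
  shows "DQmor V W X R (a_map V W c) = a_map V X (Qmor V W X R c)"
proof
  fix x
  show "DQmor V W X R (a_map V W c) x = a_map V X (Qmor V W X R c) x"
  proof (cases "x \<in> Qobj V X")
    case True
    have q: "Qmor V X W (converse R) x \<in> Qobj V W" using conv_hom[OF R] by (rule Qmor_in)
    have "DQmor V W X R (a_map V W c) x = a_map V W c (Qmor V X W (converse R) x)"
      using True by (simp add: DQmor_def Dmor_def dualmap_def)
    also have "\<dots> = pair V W (Qmor V X W (converse R) x) c"
      using q by (simp add: a_app pair_sym)
    also have "\<dots> = pair V X x (Qmor V W X R c)"
      using adjoint[OF R] by simp
    also have "\<dots> = a_map V X (Qmor V W X R c) x"
      using True by (simp add: a_app pair_sym)
    finally show ?thesis .
  next
    case False
    then show ?thesis by (simp add: DQmor_def Dmor_def dualmap_def a_formula)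
  qed
qed

definition tot :: "qspace \<Rightarrow> rel \<Rightarrow> bit" where
  "tot V f = (if (\<forall>a\<in>carrier_q V. \<exists>b. (a, b) \<in> f) then 1 else 0)"

lemma Pb_char:
  assumes f: "f \<in> span_hom V W" and h: "h \<in> span_hom V W"
  shows "Pb V f h = (if h = f then tot V f else 0)"
proof -
  have *: "(h O converse f = span_id V) \<longleftrightarrow> (h = f \<and> (\<forall>a\<in>carrier_q V. \<exists>b. (a, b) \<in> f))"
  proof
    assume e: "h O converse f = span_id V"
    have ex: "\<exists>y. (a, y) \<in> h \<and> (a, y) \<in> f" if "a \<in> carrier_q V" for a
    proof -
      have "(a, a) \<in> span_id V" using that by (simp add: span_id_def)
      then show ?thesis using e by blast
    qed
    have fun_f: "\<And>a b c. (a, b) \<in> f \<Longrightarrow> (a, c) \<in> f \<Longrightarrow> b = c"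
      and fun_h: "\<And>a b c. (a, b) \<in> h \<Longrightarrow> (a, c) \<in> h \<Longrightarrow> b = c"
      and sub_f: "f \<subseteq> carrier_q V \<times> carrier_q W" and sub_h: "h \<subseteq> carrier_q V \<times> carrier_q W"
      using homD[OF f] homD[OF h] by auto
    have "f \<subseteq> h"
    proof
      fix p assume p: "p \<in> f"
      obtain a b where pab: "p = (a, b)" by (cases p)
      then have "a \<in> carrier_q V" using sub_f p by blast
      then obtain y where "(a, y) \<in> h" "(a, y) \<in> f" using ex by blast
      then show "p \<in> h" using fun_f[of a b y] p pab by simp
    qed
    moreover have "h \<subseteq> f"
    proof
      fix p assume p: "p \<in> h"
      obtain a b where pab: "p = (a, b)" by (cases p)
      then have "a \<in> carrier_q V" using sub_h p by blast
      then obtain y where "(a, y) \<in> h" "(a, y) \<in> f" using ex by blast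
      then show "p \<in> f" using fun_h[of a b y] p pab by simp
    qed
    ultimately show "h = f \<and> (\<forall>a\<in>carrier_q V. \<exists>b. (a, b) \<in> f)" using ex by blast
  next
    assume a: "h = f \<and> (\<forall>a\<in>carrier_q V. \<exists>b. (a, b) \<in> f)"
    have inj_f: "\<And>a b c. (a, c) \<in> f \<Longrightarrow> (b, c) \<in> f \<Longrightarrow> a = b"
      and sub_f: "f \<subseteq> carrier_q V \<times> carrier_q W"
      using homD[OF f] by auto
    show "h O converse f = span_id V"
    proof (rule set_eqI)
      fix p :: "vec \<times> vec"
      obtain u v where p: "p = (u, v)" by (cases p)
      show "p \<in> h O converse f \<longleftrightarrow> p \<in> span_id V"
      proof
        assume "p \<in> h O converse f"
        then obtain y where "(u, y) \<in> f" "(v, y) \<in> f" using a p by auto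
        then show "p \<in> span_id V" using inj_f sub_f p unfolding span_id_def by auto
      next
        assume "p \<in> span_id V"
        then have "u = v" "u \<in> carrier_q V" using p unfolding span_id_def by auto
        then show "p \<in> h O converse f" using a p by auto
      qed
    qed
  qed
  show ?thesis unfolding Pb_def tot_def using * by auto
qed

lemma pair_simple: "pair V W c y = (\<Sum>f\<in>span_hom V W. c f * y f * tot V f)"
proof -
  have "pair V W c y = (\<Sum>f\<in>span_hom V W. \<Sum>h\<in>span_hom V W. if h = f then c f * y f * tot V f else 0)"
    unfolding pair_def by (intro sum.cong refl) (simp add: Pb_char)
  also have "\<dots> = (\<Sum>f\<in>span_hom V W. c f * y f * tot V f)"
    by (simp add: sum.delta'[OF finite_hom] sum.delta[OF finite_hom])
  finally show ?thesis .
qed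

definition agam :: "qspace \<Rightarrow> qspace \<Rightarrow> ((rel \<Rightarrow> bit) \<Rightarrow> bit) \<Rightarrow> (((rel \<Rightarrow> bit) \<Rightarrow> bit) \<Rightarrow> bit)" where
  "agam V W \<phi> = (\<lambda>\<psi>. if \<psi> \<in> iso_obj V W then \<phi> (SOME x. x \<in> Qobj V W \<and> a_map V W x = \<psi>) else 0)"

lemma isoE: "\<psi> \<in> iso_obj V W \<Longrightarrow> (\<And>x. x \<in> Qobj V W \<Longrightarrow> \<psi> = a_map V W x \<Longrightarrow> P) \<Longrightarrow> P"
  unfolding iso_obj_def by blast

lemma isoI: "x \<in> Qobj V W \<Longrightarrow> a_map V W x \<in> iso_obj V W"
  unfolding iso_obj_def by blast

lemma agam_a:
  assumes c: "c \<in> Qobj V W" and x: "x \<in> Qobj V W"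
  shows "agam V W (a_map V W c) (a_map V W x) = pair V W c x"
proof -
  have ex: "\<exists>x'. x' \<in> Qobj V W \<and> a_map V W x' = a_map V W x" using x by blast
  define x' where "x' = (SOME x'. x' \<in> Qobj V W \<and> a_map V W x' = a_map V W x)"
  have x': "x' \<in> Qobj V W" "a_map V W x' = a_map V W x"
    using someI_ex[OF ex] unfolding x'_def by blast+
  have "agam V W (a_map V W c) (a_map V W x) = a_map V W c x'"
    using isoI[OF x] unfolding agam_def x'_def by simp
  also have "\<dots> = pair V W x' c" using x'(1) by (simp add: a_app pair_sym)
  also have "\<dots> = a_map V W x' c" using c by (simp add: a_app)
  also have "\<dots> = pair V W x c" using c x'(2) by (simp add: a_app)
  also have "\<dots> = pair V W c x" by (rule pair_sym)
  finally show ?thesis .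
qed

lemma agam_dual:
  assumes "\<phi> \<in> iso_obj V W"
  shows "agam V W \<phi> \<in> dual (iso_obj V W)"
proof -
  obtain c where c: "c \<in> Qobj V W" "\<phi> = a_map V W c" using assms by (rule isoE)
  have "agam V W \<phi> (\<psi>1 + \<psi>2) = agam V W \<phi> \<psi>1 + agam V W \<phi> \<psi>2"
    if h1: "\<psi>1 \<in> iso_obj V W" and h2: "\<psi>2 \<in> iso_obj V W" for \<psi>1 \<psi>2
  proof -
    obtain x1 where x1: "x1 \<in> Qobj V W" "\<psi>1 = a_map V W x1" using h1 by (rule isoE)
    obtain x2 where x2: "x2 \<in> Qobj V W" "\<psi>2 = a_map V W x2" using h2 by (rule isoE)
    have "\<psi>1 + \<psi>2 = a_map V W (x1 + x2)" using x1 x2 by (simp add: a_add)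
    then show ?thesis using x1 x2 c Qobj_add[OF x1(1) x2(1)]
      by (simp add: agam_a pair_add2)
  qed
  moreover have "agam V W \<phi> \<psi> = 0" if "\<psi> \<notin> iso_obj V W" for \<psi>
    using that by (simp add: agam_def)
  ultimately show ?thesis unfolding dual_def by blast
qed

lemma agam_add: "agam V W (\<phi>1 + \<phi>2) = agam V W \<phi>1 + agam V W \<phi>2"
  by (rule ext) (simp add: agam_def)

lemma iso_add: "\<phi>1 \<in> iso_obj V W \<Longrightarrow> \<phi>2 \<in> iso_obj V W \<Longrightarrow> \<phi>1 + \<phi>2 \<in> iso_obj V W"
  by (metis isoE isoI a_add Qobj_add)

lemma agam_inj: "inj_on (agam V W) (iso_obj V W)"
proof (rule inj_onI)
  fix \<phi>1 \<phi>2 assume p1: "\<phi>1 \<in> iso_obj V W" and p2: "\<phi>2 \<in> iso_obj V W"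
    and e: "agam V W \<phi>1 = agam V W \<phi>2"
  obtain c1 where c1: "c1 \<in> Qobj V W" "\<phi>1 = a_map V W c1" using p1 by (rule isoE)
  obtain c2 where c2: "c2 \<in> Qobj V W" "\<phi>2 = a_map V W c2" using p2 by (rule isoE)
  show "\<phi>1 = \<phi>2"
  proof
    fix x
    show "\<phi>1 x = \<phi>2 x"
    proof (cases "x \<in> Qobj V W")
      case True
      have "\<phi>1 x = agam V W \<phi>1 (a_map V W x)" using c1 True by (simp add: agam_a a_app)
      also have "\<dots> = agam V W \<phi>2 (a_map V W x)" using e by simp
      also have "\<dots> = \<phi>2 x" using c2 True by (simp add: agam_a a_app)
      finally show ?thesis .
    next
      case False
      then show ?thesis using c1 c2 by (simp add: a_formula)
    qed
  qed
qed

lemma tot_cases: "tot V f = 0 \<or> tot V f = 1"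
  by (simp add: tot_def)

lemma agam_surj:
  assumes th: "\<theta> \<in> dual (iso_obj V W)"
  shows "\<exists>\<phi>\<in>iso_obj V W. agam V W \<phi> = \<theta>"
proof -
  define H where "H = span_hom V W"
  define \<delta> where "\<delta> f = (\<lambda>g. if g = f then 1 else (0::bit))" for f :: rel
  define ind where "ind S = (\<lambda>g. if g \<in> S then 1 else (0::bit))" for S :: "rel set"
  define t where "t = (\<lambda>f. if f \<in> H then \<theta> (a_map V W (\<delta> f)) else 0)"
  have finH: "finite H" unfolding H_def by (rule finite_hom)
  have tQ: "t \<in> Qobj V W" unfolding Qobj_def t_def H_def by simp
  have dQ: "\<delta> f \<in> Qobj V W" if "f \<in> H" for f using that unfolding Qobj_def \<delta>_def H_def by auto
  have iQ: "ind S \<in> Qobj V W" if "S \<subseteq> H" for S using that unfolding Qobj_def ind_def H_def by auto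
  have thadd: "\<theta> (\<psi>1 + \<psi>2) = \<theta> \<psi>1 + \<theta> \<psi>2" if "\<psi>1 \<in> iso_obj V W" "\<psi>2 \<in> iso_obj V W" for \<psi>1 \<psi>2
    using th that unfolding dual_def by blast
  have thoff: "\<theta> \<psi> = 0" if "\<psi> \<notin> iso_obj V W" for \<psi>
    using th that unfolding dual_def by blast
  have a0: "a_map V W 0 = 0" by (rule ext) (simp add: a_formula pair_def)
  have z: "0 \<in> iso_obj V W" using isoI[of 0 V W] Qobj_zero[of V W] a0 by simp
  have "\<theta> 0 = \<theta> 0 + \<theta> 0" using thadd[OF z z] by simp
  then have th0: "\<theta> 0 = 0" by (simp add: bit_self)
  have pair_delta: "pair V W c (\<delta> f) = c f * tot V f" if "f \<in> H" for c f
  proof -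
    have "pair V W c (\<delta> f) = (\<Sum>g\<in>H. if g = f then c f * tot V f else 0)"
      unfolding pair_simple H_def by (intro sum.cong refl) (simp add: \<delta>_def)
    also have "\<dots> = c f * tot V f" using that finH by simp
    finally show ?thesis .
  qed
  have tf: "t f * tot V f = t f" if "f \<in> H" for f
  proof (cases "tot V f = 0")
    case True
    have "a_map V W (\<delta> f) = 0"
    proof
      fix y show "a_map V W (\<delta> f) y = 0 y"
        using True that by (simp add: a_formula pair_sym[of V W "\<delta> f"] pair_delta)
    qed
    then show ?thesis using True th0 that by (simp add: t_def)
  next
    case False
    then show ?thesis using tot_cases[of V f] by simp
  qed
  have ind_th: "S \<subseteq> H \<longrightarrow> \<theta> (a_map V W (ind S)) = pair V W t (ind S)" if "finite S" for S
    using that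
  proof (induction S rule: finite_induct)
    case empty
    have e: "ind {} = 0" by (rule ext) (simp add: ind_def)
    have "\<theta> (a_map V W (ind {})) = 0" by (simp only: e a0 th0)
    moreover have "pair V W t (ind {}) = 0" by (simp only: e) (simp add: pair_def)
    ultimately show ?case by simp
  next
    case (insert f S)
    show ?case
    proof
      assume sub: "insert f S \<subseteq> H"
      then have fH: "f \<in> H" and SH: "S \<subseteq> H" by auto
      have "ind (insert f S) = ind S + \<delta> f"
        by (rule ext) (use insert(2) in \<open>auto simp: ind_def \<delta>_def\<close>)
      then have "\<theta> (a_map V W (ind (insert f S))) = \<theta> (a_map V W (ind S) + a_map V W (\<delta> f))"
        by (simp add: a_add)
      also have "\<dots> = \<theta> (a_map V W (ind S)) + \<theta> (a_map V W (\<delta> f))"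
        by (intro thadd isoI iQ dQ SH fH)
      also have "\<dots> = pair V W t (ind S) + t f"
        using insert(3) SH fH by (simp add: t_def)
      also have "\<dots> = pair V W t (ind S) + pair V W t (\<delta> f)"
        using fH tf by (simp add: pair_delta)
      also have "\<dots> = pair V W t (ind (insert f S))"
        using \<open>ind (insert f S) = ind S + \<delta> f\<close> by (simp add: pair_add2)
      finally show "\<theta> (a_map V W (ind (insert f S))) = pair V W t (ind (insert f S))" .
    qed
  qed
  have x_ind: "x = ind {f \<in> H. x f = 1}" if "x \<in> Qobj V W" for x
  proof
    fix g show "x g = ind {f \<in> H. x f = 1} g"
      using that unfolding ind_def Qobj_def H_def by (cases "x g") auto
  qed
  have main: "\<theta> (a_map V W x) = pair V W t x" if "x \<in> Qobj V W" for x
  proof -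
    have "finite {f \<in> H. x f = 1}" using finH by simp
    then have "\<theta> (a_map V W (ind {f \<in> H. x f = 1})) = pair V W t (ind {f \<in> H. x f = 1})"
      using ind_th by blast
    then show ?thesis using x_ind[OF that] by simp
  qed
  have "agam V W (a_map V W t) = \<theta>"
  proof
    fix \<psi>
    show "agam V W (a_map V W t) \<psi> = \<theta> \<psi>"
    proof (cases "\<psi> \<in> iso_obj V W")
      case True
      then obtain x where x: "x \<in> Qobj V W" "\<psi> = a_map V W x" by (rule isoE)
      then show ?thesis using tQ by (simp add: agam_a main)
    next
      case False
      then show ?thesis by (simp add: agam_def thoff)
    qed
  qed
  then show ?thesis using isoI[OF tQ] by blast
qed

theorem proposition4p28:
  assumes "V \<in> qobj"
  shows "\<exists>\<gamma>. is_nat_iso (iso_obj V) (iso_mor V) (Dobj (iso_obj V)) (Dmor (iso_obj V) (iso_mor V)) \<gamma>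
            \<and> (\<forall>W\<in>qobj. \<forall>x\<in>iso_obj V W.
                  \<gamma> W x = Dnat (iso_obj V) \<gamma> W (eta (iso_obj V) W x))"
proof (intro exI conjI)
  show "is_nat_iso (iso_obj V) (iso_mor V) (Dobj (iso_obj V)) (Dmor (iso_obj V) (iso_mor V)) (agam V)"
    unfolding is_nat_iso_def
  proof (intro conjI ballI)
    fix W
    show "f2linear (iso_obj V W) (Dobj (iso_obj V) W) (agam V W)"
      unfolding f2linear_def Dobj_def by (simp add: agam_dual agam_add)
    show "bij_betw (agam V W) (iso_obj V W) (Dobj (iso_obj V) W)"
      unfolding bij_betw_def Dobj_def
      using agam_inj agam_dual agam_surj by blast
  next
    fix W X R \<phi>
    assume R: "R \<in> span_hom W X" and p: "\<phi> \<in> iso_obj V W"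
    obtain c where c: "c \<in> Qobj V W" "\<phi> = a_map V W c" using p by (rule isoE)
    have c': "Qmor V W X R c \<in> Qobj V X" using R by (rule Qmor_in)
    have R': "converse R \<in> span_hom X W" using R by (rule conv_hom)
    have lhs: "iso_mor V W X R \<phi> = a_map V X (Qmor V W X R c)"
      using c a_nat[OF R] by (simp add: iso_mor_def)
    show "agam V X (iso_mor V W X R \<phi>) = Dmor (iso_obj V) (iso_mor V) W X R (agam V W \<phi>)"
    proof
      fix \<psi>
      show "agam V X (iso_mor V W X R \<phi>) \<psi> = Dmor (iso_obj V) (iso_mor V) W X R (agam V W \<phi>) \<psi>"
      proof (cases "\<psi> \<in> iso_obj V X")
        case True
        then obtain x where x: "x \<in> Qobj V X" "\<psi> = a_map V X x" by (rule isoE)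
        have q: "Qmor V X W (converse R) x \<in> Qobj V W" using R' by (rule Qmor_in)
        have "Dmor (iso_obj V) (iso_mor V) W X R (agam V W \<phi>) \<psi>
              = agam V W \<phi> (DQmor V X W (converse R) (a_map V X x))"
          using True x by (simp add: Dmor_def dualmap_def iso_mor_def)
        also have "\<dots> = agam V W (a_map V W c) (a_map V W (Qmor V X W (converse R) x))"
          using c a_nat[OF R'] by simp
        also have "\<dots> = pair V W c (Qmor V X W (converse R) x)"
          using c q by (simp add: agam_a)
        also have "\<dots> = pair V X x (Qmor V W X R c)"
          using adjoint[OF R, of V x c] by (simp add: pair_sym)
        also have "\<dots> = agam V X (iso_mor V W X R \<phi>) \<psi>"
          using lhs x c' by (simp add: agam_a pair_sym)
        finally show ?thesis by simp
      next
        case False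
        then show ?thesis by (simp add: agam_def Dmor_def dualmap_def)
      qed
    qed
  qed
  show "\<forall>W\<in>qobj. \<forall>x\<in>iso_obj V W. agam V W x = Dnat (iso_obj V) (agam V) W (eta (iso_obj V) W x)"
  proof (intro ballI)
    fix W \<phi>
    assume p: "\<phi> \<in> iso_obj V W"
    obtain c where c: "c \<in> Qobj V W" "\<phi> = a_map V W c" using p by (rule isoE)
    show "agam V W \<phi> = Dnat (iso_obj V) (agam V) W (eta (iso_obj V) W \<phi>)"
    proof
      fix \<psi>
      show "agam V W \<phi> \<psi> = Dnat (iso_obj V) (agam V) W (eta (iso_obj V) W \<phi>) \<psi>"
      proof (cases "\<psi> \<in> iso_obj V W")
        case True
        then obtain y where y: "y \<in> Qobj V W" "\<psi> = a_map V W y" by (rule isoE)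
        have "Dnat (iso_obj V) (agam V) W (eta (iso_obj V) W \<phi>) \<psi> = agam V W \<psi> \<phi>"
          using True agam_dual[OF True] by (simp add: Dnat_def dualmap_def eta_def)
        also have "\<dots> = pair V W y c" using y c by (simp add: agam_a)
        also have "\<dots> = agam V W \<phi> \<psi>" using y c by (simp add: agam_a pair_sym)
        finally show ?thesis by simp
      next
        case False
        then show ?thesis by (simp add: agam_def Dnat_def dualmap_def)
      qed
    qed
  qed
qed

end
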